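(* Let $A$ and $B$ be tridendriform algebras over a field $\mathbb{K}$. Define three bilinear products on $A\otimes B$ by $$(a\otimes b)\prec(c\otimes d)=(a*c)\otimes(b\prec d),\quad (a\otimes b)\cdot(c\otimes d)=(a*c)\otimes(b\cdot d),\quad (a\otimes b)\succ(c\otimes d)=(a*c)\otimes(b\succ d)$$ for $a,c\in A$, $b,d\in B$. Then $(A\otimes B,\prec,\cdot,\succ)$ is a tridendriform algebra.
   Context: A tridendriform algebra over $\mathbb{K}$ is a vector space $A$ with three bilinear products $\prec,\cdot,\succ$ such that, writing $a*b=a\prec b+a\cdot b+a\succ b$, for all $a,b,c\in A$: $(a\prec b)\prec c=a\prec(b*c)$, $(a\succ b)\prec c=a\succ(b\prec c)$, $(a*b)\succ c=a\succ(b\succ c)$, $(a\succ b)\cdot c=a\succ(b\cdot c)$, $(a\prec b)\cdot c=a\cdot(b\succ c)$, $(a\cdot b)\prec c=a\cdot(b\prec c)$, $(a\cdot b)\cdot c=a\cdot(b\cdot c)$. (These imply that $*$ is associative.) In the claim, $a*c$ denotes this associative product of $A$. *)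

theory Defs
  imports Complex_Main
begin

definition bilinear_map ::
  "('k::field \<Rightarrow> 'a::ab_group_add \<Rightarrow> 'a) \<Rightarrow> ('k \<Rightarrow> 'b::ab_group_add \<Rightarrow> 'b)
   \<Rightarrow> ('k \<Rightarrow> 'c::ab_group_add \<Rightarrow> 'c) \<Rightarrow> ('a \<Rightarrow> 'b \<Rightarrow> 'c) \<Rightarrow> bool" where
  "bilinear_map s1 s2 s3 f \<longleftrightarrow>
     (\<forall>x. Vector_Spaces.linear s2 s3 (f x)) \<and> (\<forall>y. Vector_Spaces.linear s1 s3 (\<lambda>x. f x y))"

definition tri_star :: "('a \<Rightarrow> 'a \<Rightarrow> 'a::plus) \<Rightarrow> ('a \<Rightarrow> 'a \<Rightarrow> 'a) \<Rightarrow> ('a \<Rightarrow> 'a \<Rightarrow> 'a)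
    \<Rightarrow> 'a \<Rightarrow> 'a \<Rightarrow> 'a" where
  "tri_star l d r a b = l a b + d a b + r a b"

text \<open>Tridendriform algebra: a vector space with three bilinear products
  l (\<prec>), d (\<cdot>), r (\<succ>) satisfying the seven axioms.\<close>
definition tridendriform ::
  "('k::field \<Rightarrow> 'a::ab_group_add \<Rightarrow> 'a) \<Rightarrow> ('a \<Rightarrow> 'a \<Rightarrow> 'a) \<Rightarrow> ('a \<Rightarrow> 'a \<Rightarrow> 'a)
   \<Rightarrow> ('a \<Rightarrow> 'a \<Rightarrow> 'a) \<Rightarrow> bool" where
  "tridendriform s l d r \<longleftrightarrow>
     vector_space s \<and> bilinear_map s s s l \<and> bilinear_map s s s d \<and> bilinear_map s s s r \<and>
     (\<forall>a b c.
        l (l a b) c = l a (tri_star l d r b c) \<and>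
        l (r a b) c = r a (l b c) \<and>
        r (tri_star l d r a b) c = r a (r b c) \<and>
        d (r a b) c = r a (d b c) \<and>
        d (l a b) c = d a (r b c) \<and>
        l (d a b) c = d a (l b c) \<and>
        d (d a b) c = d a (d b c))"

text \<open>(T, t) is a tensor product of the vector spaces A and B over the field 'k:
  t is bilinear, the pure tensors span T, and t sends products of linearly
  independent sets injectively onto linearly independent sets (so that, for bases
  X, Y of A, B, the family t x y is a basis of T: the standard construction).\<close>
definition tensor_product ::
  "('k::field \<Rightarrow> 'a::ab_group_add \<Rightarrow> 'a) \<Rightarrow> ('k \<Rightarrow> 'b::ab_group_add \<Rightarrow> 'b)
   \<Rightarrow> ('k \<Rightarrow> 't::ab_group_add \<Rightarrow> 't) \<Rightarrow> ('a \<Rightarrow> 'b \<Rightarrow> 't) \<Rightarrow> bool" where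
  "tensor_product sA sB sT t \<longleftrightarrow>
     vector_space sA \<and> vector_space sB \<and> vector_space sT \<and>
     bilinear_map sA sB sT t \<and>
     module.span sT (case_prod t ` UNIV) = UNIV \<and>
     (\<forall>X Y. module.independent sA X \<and> module.independent sB Y \<longrightarrow>
        inj_on (case_prod t) (X \<times> Y) \<and> module.independent sT (case_prod t ` (X \<times> Y)))"

end

theory Submission
  imports Defs
begin

lemma ext3:
  fixes s :: "'k::field \<Rightarrow> 'v::ab_group_add \<Rightarrow> 'v"
    and F G :: "'v \<Rightarrow> 'v \<Rightarrow> 'v \<Rightarrow> 'v"
  assumes vs: "vector_space s" and sp: "module.span s P = UNIV"
    and F1: "\<And>y z. Vector_Spaces.linear s s (\<lambda>x. F x y z)" and F2: "\<And>x z. Vector_Spaces.linear s s (\<lambda>y. F x y z)"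
    and F3: "\<And>x y. Vector_Spaces.linear s s (\<lambda>z. F x y z)"
    and G1: "\<And>y z. Vector_Spaces.linear s s (\<lambda>x. G x y z)" and G2: "\<And>x z. Vector_Spaces.linear s s (\<lambda>y. G x y z)"
    and G3: "\<And>x y. Vector_Spaces.linear s s (\<lambda>z. G x y z)"
    and eq: "\<And>x y z. x \<in> P \<Longrightarrow> y \<in> P \<Longrightarrow> z \<in> P \<Longrightarrow> F x y z = G x y z"
  shows "F x y z = G x y z"
proof -
  interpret vector_space_pair s s using vs by (simp add: vector_space_pair_def)
  have 1: "F x y z = G x y z" if "y \<in> P" "z \<in> P" for x y z
    using vector_space_pair.linear_eq_on[OF vector_space_pair_axioms F1 G1, of x P] sp eq that by auto
  have 2: "F x y z = G x y z" if "z \<in> P" for x y z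
    using vector_space_pair.linear_eq_on[OF vector_space_pair_axioms F2 G2, of y P] sp 1 that by auto
  show ?thesis
    using vector_space_pair.linear_eq_on[OF vector_space_pair_axioms F3 G3, of z P] sp 2 by auto
qed

lemma bil_facts:
  assumes "bilinear_map s s s f"
  shows "f (x + y) z = f x z + f y z" "f x (y + z) = f x y + f x z"
    "f (s c x) z = s c (f x z)" "f x (s c z) = s c (f x z)"
  using assms unfolding bilinear_map_def Vector_Spaces.linear_iff by auto

lemma lin_intro:
  assumes "vector_space s" "\<And>x y. f (x + y) = f x + f y" "\<And>c x. f (s c x) = s c (f x)"
  shows "Vector_Spaces.linear s s f"
  using assms by (simp add: Vector_Spaces.linear_iff)

lemma star_assoc:
  assumes "tridendriform s l d r"
  shows "tri_star l d r (tri_star l d r a b) c = tri_star l d r a (tri_star l d r b c)"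
proof -
  have ax: "\<forall>a b c.
        l (l a b) c = l a (tri_star l d r b c) \<and>
        l (r a b) c = r a (l b c) \<and>
        r (tri_star l d r a b) c = r a (r b c) \<and>
        d (r a b) c = r a (d b c) \<and>
        d (l a b) c = d a (r b c) \<and>
        l (d a b) c = d a (l b c) \<and>
        d (d a b) c = d a (d b c)" and bl: "bilinear_map s s s l" and bd: "bilinear_map s s s d"
      and br: "bilinear_map s s s r"
    using assms unfolding tridendriform_def by auto
  note bf = bil_facts[OF bl] bil_facts[OF bd] bil_facts[OF br]
  have "tri_star l d r (tri_star l d r a b) c
      = l (tri_star l d r a b) c + d (tri_star l d r a b) c + r (tri_star l d r a b) c"
    by (simp add: tri_star_def)
  also have "l (tri_star l d r a b) c = l a (tri_star l d r b c) + d a (l b c) + r a (l b c)"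
    using ax by (simp add: tri_star_def bf)
  also have "d (tri_star l d r a b) c = d a (r b c) + d a (d b c) + r a (d b c)"
    using ax by (simp add: tri_star_def bf)
  also have "r (tri_star l d r a b) c = r a (r b c)" using ax by simp
  finally show ?thesis by (simp add: tri_star_def bf add_ac)
qed

theorem mainTheorem1:
  fixes sA :: "'k::field \<Rightarrow> 'a::ab_group_add \<Rightarrow> 'a"
    and sB :: "'k \<Rightarrow> 'b::ab_group_add \<Rightarrow> 'b"
    and sT :: "'k \<Rightarrow> 't::ab_group_add \<Rightarrow> 't"
    and lA dA rA :: "'a \<Rightarrow> 'a \<Rightarrow> 'a"
    and lB dB rB :: "'b \<Rightarrow> 'b \<Rightarrow> 'b"
    and lT dT rT :: "'t \<Rightarrow> 't \<Rightarrow> 't"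
    and t :: "'a \<Rightarrow> 'b \<Rightarrow> 't"
  assumes A: "tridendriform sA lA dA rA"
    and B: "tridendriform sB lB dB rB"
    and T: "tensor_product sA sB sT t"
    and bl: "bilinear_map sT sT sT lT"
    and bd: "bilinear_map sT sT sT dT"
    and br: "bilinear_map sT sT sT rT"
    and l_def: "\<And>a b c d. lT (t a b) (t c d) = t (tri_star lA dA rA a c) (lB b d)"
    and d_def: "\<And>a b c d. dT (t a b) (t c d) = t (tri_star lA dA rA a c) (dB b d)"
    and r_def: "\<And>a b c d. rT (t a b) (t c d) = t (tri_star lA dA rA a c) (rB b d)"
  shows "tridendriform sT lT dT rT"
proof -
  have vs: "vector_space sT" and sp: "module.span sT (case_prod t ` UNIV) = UNIV"
    and tb: "bilinear_map sA sB sT t"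
    using T unfolding tensor_product_def by auto
  have tadd: "t x (y + z) = t x y + t x z" for x y z
    using tb unfolding bilinear_map_def Vector_Spaces.linear_iff by auto
  have axB: "\<forall>a b c.
        lB (lB a b) c = lB a (tri_star lB dB rB b c) \<and>
        lB (rB a b) c = rB a (lB b c) \<and>
        rB (tri_star lB dB rB a b) c = rB a (rB b c) \<and>
        dB (rB a b) c = rB a (dB b c) \<and>
        dB (lB a b) c = dB a (rB b c) \<and>
        lB (dB a b) c = dB a (lB b c) \<and>
        dB (dB a b) c = dB a (dB b c)"
    using B unfolding tridendriform_def by auto
  note asA = star_assoc[OF A]
  have triT: "tri_star lT dT rT (t a b) (t c d) = t (tri_star lA dA rA a c) (tri_star lB dB rB b d)"
    for a b c d by (simp add: tri_star_def l_def d_def r_def tadd)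
  note bf = bil_facts[OF bl] bil_facts[OF bd] bil_facts[OF br]
  note sd = vector_space.vector_space_assms(1)[OF vs]
  have lin1: "Vector_Spaces.linear sT sT f" if "\<And>x y. f (x + y) = f x + f y" "\<And>c x. f (sT c x) = sT c (f x)" for f
    using lin_intro[OF vs] that by blast
  note L = lin1 lin1 lin1 lin1 lin1 lin1
  show ?thesis
    unfolding tridendriform_def
  proof (intro conjI allI vs bl bd br)
    fix x y z
    show "lT (lT x y) z = lT x (tri_star lT dT rT y z)"
      by (rule ext3[OF vs sp, where F="\<lambda>x y z. lT (lT x y) z" and G="\<lambda>x y z. lT x (tri_star lT dT rT y z)"]; (auto simp: triT l_def d_def r_def axB asA; fail)?; auto simp: bf sd tri_star_def add_ac intro!: L)
    show "lT (rT x y) z = rT x (lT y z)"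
      by (rule ext3[OF vs sp, where F="\<lambda>x y z. lT (rT x y) z" and G="\<lambda>x y z. rT x (lT y z)"]; (auto simp: triT l_def d_def r_def axB asA; fail)?; auto simp: bf sd tri_star_def add_ac intro!: L)
    show "rT (tri_star lT dT rT x y) z = rT x (rT y z)"
      by (rule ext3[OF vs sp, where F="\<lambda>x y z. rT (tri_star lT dT rT x y) z" and G="\<lambda>x y z. rT x (rT y z)"]; (auto simp: triT l_def d_def r_def axB asA; fail)?; auto simp: bf sd tri_star_def add_ac intro!: L)
    show "dT (rT x y) z = rT x (dT y z)"
      by (rule ext3[OF vs sp, where F="\<lambda>x y z. dT (rT x y) z" and G="\<lambda>x y z. rT x (dT y z)"]; (auto simp: triT l_def d_def r_def axB asA; fail)?; auto simp: bf sd tri_star_def add_ac intro!: L)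
    show "dT (lT x y) z = dT x (rT y z)"
      by (rule ext3[OF vs sp, where F="\<lambda>x y z. dT (lT x y) z" and G="\<lambda>x y z. dT x (rT y z)"]; (auto simp: triT l_def d_def r_def axB asA; fail)?; auto simp: bf sd tri_star_def add_ac intro!: L)
    show "lT (dT x y) z = dT x (lT y z)"
      by (rule ext3[OF vs sp, where F="\<lambda>x y z. lT (dT x y) z" and G="\<lambda>x y z. dT x (lT y z)"]; (auto simp: triT l_def d_def r_def axB asA; fail)?; auto simp: bf sd tri_star_def add_ac intro!: L)
    show "dT (dT x y) z = dT x (dT y z)"
      by (rule ext3[OF vs sp, where F="\<lambda>x y z. dT (dT x y) z" and G="\<lambda>x y z. dT x (dT y z)"]; (auto simp: triT l_def d_def r_def axB asA; fail)?; auto simp: bf sd tri_star_def add_ac intro!: L)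
  qed
qed

end
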